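(* Let $F(t)\in\mathbb{Z}[t]$ be squarefree and let $D(t)\in\mathbb{Z}[t]$. Suppose that for all but finitely many integers $n$, the squarefree part of $F(n)$ divides $D(n)$. Then $F(t)$ divides $D(t)$ in $\mathbb{Q}[t]$.
   Context: A polynomial $F(t)\in\mathbb{Z}[t]$ is called squarefree if whenever $F(t)=g(t)^2h(t)$ with $g,h\in\mathbb{Z}[t]$, then $g=\pm1$. The squarefree part of a nonzero integer $m$ is the unique squarefree integer $s$ with $m/s$ a perfect square. *)

theory Defs
  imports "HOL-Computational_Algebra.Computational_Algebra"
begin

definition sqfree_int_poly :: "int poly \<Rightarrow> bool" where
  "sqfree_int_poly F \<longleftrightarrow> (\<forall>g h. F = g ^ 2 * h \<longrightarrow> g = 1 \<or> g = -1)"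

text \<open>Squarefree part of a nonzero integer m: the unique squarefree integer s with
  m / s a perfect square (only meaningful for m \<noteq> 0).\<close>
definition sqf_part :: "int \<Rightarrow> int" where
  "sqf_part m = (THE s. squarefree s \<and> (\<exists>k::int. m = s * k ^ 2))"

end

theory Submission
  imports Defs "HOL-Computational_Algebra.Field_as_Ring"
begin

abbreviation qp :: "int poly \<Rightarrow> rat poly" where "qp \<equiv> map_poly of_int"

lemma qp_pCons: "qp (pCons a p) = pCons (of_int a) (qp p)"
  by (simp add: map_poly_pCons)

lemma qp_add: "qp (p + q) = qp p + qp q"
  by (intro poly_eqI) (simp add: coeff_map_poly)

lemma qp_smult: "qp (smult a p) = smult (of_int a) (qp p)"
  by (rule map_poly_smult) auto

lemma qp_mult: "qp (p * q) = qp p * qp q"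
  by (induction p) (simp_all add: qp_add qp_smult qp_pCons)

lemma qp_power: "qp (p ^ n) = qp p ^ n"
  by (induction n) (simp_all add: qp_mult)

lemma qp_const: "qp [:c:] = [:of_int c:]"
  by (simp add: map_poly_pCons)

lemma qp_inj: "qp p = qp q \<Longrightarrow> p = q"
  by (metis (no_types, lifting) coeff_map_poly of_int_0 of_int_eq_iff poly_eqI)

lemma qp_poly: "poly (qp p) (of_int x) = of_int (poly p x)"
  by (induction p) (simp_all add: qp_pCons)

lemma qp_pderiv: "qp (pderiv p) = pderiv (qp p)"
  by (induction p) (simp_all add: qp_pCons pderiv_pCons qp_add)

lemma qp_degree: "degree (qp p) = degree p"
  by (simp add: degree_map_poly)

lemma clear_denom: "\<exists>c::int. c > 0 \<and> (\<exists>U. qp U = smult (of_int c) u)"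
proof (induction u)
  case 0
  then show ?case by (intro exI[of _ 1]) (auto intro: exI[of _ 0])
next
  case (pCons a q)
  then obtain c U where c: "c > 0" "qp U = smult (of_int c) q" by auto
  obtain n d where nd: "quotient_of a = (n, d)" by (cases "quotient_of a")
  have d: "d > 0" using nd quotient_of_denom_pos by blast
  have a: "a = of_int n / of_int d" using nd quotient_of_div by blast
  have "qp (pCons (n * c) (smult d U)) = smult (of_int (c * d)) (pCons a q)"
    using c d by (simp add: qp_pCons qp_smult a mult.commute)
  then show ?case using c d by (intro exI[of _ "c*d"]) (auto intro: mult_pos_pos)
qed

lemma bezout_int:
  assumes "u * qp A + v * qp B = 1"
  shows "\<exists>U V N. N \<noteq> 0 \<and> U * A + V * B = [:N:]"
proof -
  obtain c1 U where c1: "c1 > 0" "qp U = smult (of_int c1) u" using clear_denom by blast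
  obtain c2 V where c2: "c2 > 0" "qp V = smult (of_int c2) v" using clear_denom by blast
  have "qp (smult c2 U * A + smult c1 V * B) = smult (of_int (c1*c2)) (u * qp A + v * qp B)"
    by (simp add: qp_add qp_mult qp_smult c1 c2 smult_add_right mult.commute)
  also have "\<dots> = qp [:c1*c2:]" using assms by (simp add: qp_const)
  finally have "smult c2 U * A + smult c1 V * B = [:c1*c2:]" by (rule qp_inj)
  then show ?thesis using c1 c2
    by (intro exI[of _ "smult c2 U"] exI[of _ "smult c1 V"] exI[of _ "c1*c2"]) auto
qed

lemma taylor2: "\<exists>c::int. poly f (x + h) = poly f x + h * poly (pderiv f) x + h^2 * c"
proof (induction f)
  case 0
  then show ?case by auto
next
  case (pCons a q)
  then obtain c where c: "poly q (x + h) = poly q x + h * poly (pderiv q) x + h^2 * c" by auto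
  show ?case
    by (rule exI[of _ "poly (pderiv q) x + x * c + h * c"])
       (simp add: pderiv_pCons c[unfolded add.commute[of x h]] algebra_simps power2_eq_square)
qed

lemma sqf_unique:
  fixes m s k :: int
  assumes m: "m \<noteq> 0" and s: "squarefree s" and e: "m = s * k^2"
  shows "s = squarefree_part m"
proof -
  have s0: "s \<noteq> 0" and k0: "k \<noteq> 0" using m e by auto
  have mult: "multiplicity p s = multiplicity p (squarefree_part m)" if p: "prime p" for p
  proof -
    have "multiplicity p m = multiplicity p s + 2 * multiplicity p k"
      using e s0 k0 p prime_elem_multiplicity_mult_distrib[of p s "k^2"]
        prime_elem_multiplicity_power_distrib[of p k 2] prime_ge_0_int[of p] by simp
    moreover have "multiplicity p s \<le> 1" using s s0 p squarefree_factorial_semiring'' by blast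
    ultimately have "multiplicity p s = multiplicity p m mod 2" by presburger
    then show ?thesis using p by (simp add: prime_multiplicity_squarefree_part)
  qed
  have "normalize s = normalize (squarefree_part m)"
    by (rule multiplicity_eq_imp_eq) (use s0 mult in auto)
  hence a: "\<bar>s\<bar> = \<bar>squarefree_part m\<bar>" by simp
  have sq0: "square_part m \<noteq> 0" using m by simp
  have e2: "m = squarefree_part m * square_part m ^ 2" by (rule squarefree_decompose)
  have "(sgn k)^2 = 1" using k0 by (auto simp: sgn_if)
  hence s1: "sgn m = sgn s" using e by (simp add: sgn_mult)
  have "(sgn (square_part m))^2 = 1" using sq0 by (auto simp: sgn_if)
  hence "sgn (squarefree_part m * square_part m ^ 2) = sgn (squarefree_part m)"
    by (simp add: sgn_mult)
  hence "sgn s = sgn (squarefree_part m)" using e2 s1 by simp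
  with a show ?thesis by (metis abs_mult_sgn)
qed

lemma sqf_part_eq:
  assumes "m \<noteq> 0"
  shows "sqf_part m = squarefree_part m"
  unfolding sqf_part_def
proof (rule the_equality)
  show "squarefree (squarefree_part m) \<and> (\<exists>k. m = squarefree_part m * k\<^sup>2)"
    using squarefree_decompose[of m] by auto
next
  fix s assume "squarefree s \<and> (\<exists>k. m = s * k\<^sup>2)"
  then show "s = squarefree_part m" using sqf_unique[OF assms] by blast
qed

lemma prime_dvd_sqf_part:
  fixes p m :: int
  assumes p: "prime p" and d: "p dvd m" and nd: "\<not> p^2 dvd m"
  shows "p dvd sqf_part m"
proof -
  have m: "m \<noteq> 0" using nd by auto
  let ?s = "squarefree_part m" and ?k = "square_part m"
  have e: "m = ?s * ?k^2" by (rule squarefree_decompose)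
  show ?thesis unfolding sqf_part_eq[OF m]
  proof (rule ccontr)
    assume "\<not> p dvd ?s"
    hence "p dvd ?k^2" using d e p by (metis prime_dvd_mult_iff)
    hence "p dvd ?k" using p prime_dvd_power by blast
    hence "p^2 dvd ?k^2" by simp
    hence "p^2 dvd m" using e by (metis dvd_mult)
    with nd show False by simp
  qed
qed

lemma prim_rep:
  fixes f :: "rat poly"
  assumes "f \<noteq> 0"
  shows "\<exists>g a. content g = 1 \<and> a \<noteq> 0 \<and> qp g = smult a f"
proof -
  obtain c g0 where c: "c > 0" "qp g0 = smult (of_int c) f" using clear_denom by blast
  have g0: "g0 \<noteq> 0" using c assms by (metis map_poly_0 smult_eq_0_iff of_int_eq_0_iff less_irrefl qp_inj)
  define g where "g = primitive_part g0"
  have cg: "content g = 1" using g0 by (simp add: g_def)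
  have cg0: "content g0 \<noteq> 0" using g0 by simp
  have "qp g0 = smult (of_int (content g0)) (qp g)"
    by (metis content_times_primitive_part g_def qp_smult)
  hence "smult (1 / of_int (content g0)) (qp g0) = qp g"
    using cg0 by simp
  hence "qp g = smult (of_int c / of_int (content g0)) f"
    using c by simp
  then show ?thesis using cg c cg0 by (intro exI[of _ g] exI[of _ "of_int c / of_int (content g0)"]) auto
qed

lemma sqfree_no_square:
  fixes F :: "int poly" and f :: "rat poly"
  assumes sf: "sqfree_int_poly F" and deg: "degree f > 0" and dv: "f^2 dvd qp F"
  shows False
proof -
  have f0: "f \<noteq> 0" using deg by auto
  obtain g a where g: "content g = 1" "a \<noteq> 0" "qp g = smult a f" using prim_rep[OF f0] by blast
  have "(qp g)^2 = smult (a^2) (f^2)" by (simp add: g(3) power2_eq_square mult.commute mult.left_commute)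
  hence "(qp g)^2 dvd qp F" using dv g(2) by (simp add: smult_dvd_iff)
  then obtain h where h: "qp F = (qp g)^2 * h" by (elim dvdE)
  obtain d H where dH: "d > 0" "qp H = smult (of_int d) h" using clear_denom by blast
  have "qp (g^2 * H) = qp (smult d F)"
    by (simp add: qp_mult qp_power qp_smult dH h)
  hence e: "g^2 * H = smult d F" by (rule qp_inj)
  have "content (g^2 * H) = content H" using g(1) by (simp add: content_mult power2_eq_square)
  hence "content H = d * content F" using e dH by simp
  hence "[:d:] dvd H" by (simp add: const_poly_dvd_iff_dvd_content)
  then obtain H' where H': "H = [:d:] * H'" by (elim dvdE)
  have "smult d (g^2 * H') = smult d F" using e H' by (simp add: mult.left_commute)
  hence "F = g^2 * H'" using dH smult_cancel[of d] by force
  hence "g = 1 \<or> g = -1" using sf unfolding sqfree_int_poly_def by blast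
  hence "degree g = 0" by auto
  hence "degree (qp g) = 0" by (simp add: qp_degree)
  moreover have "degree (qp g) = degree f" using g by simp
  ultimately show False using deg by simp
qed

lemma taylor_dvd: "h dvd poly f (x + h) - poly f x" for f :: "int poly"
proof -
  obtain c where "poly f (x + h) = poly f x + h * poly (pderiv f) x + h^2 * c" using taylor2 by blast
  then show ?thesis by (simp add: power2_eq_square)
qed

lemma finite_vals:
  fixes f :: "int poly"
  assumes "degree f > 0"
  shows "finite {y. poly f y = v}"
proof -
  have "f \<noteq> [:v:]" using assms by auto
  hence "f - [:v:] \<noteq> 0" by simp
  then have "finite {y. poly (f - [:v:]) y = 0}" by (rule poly_roots_finite)
  then show ?thesis by simp
qed

lemma schur:
  fixes f :: "int poly" and M :: int
  assumes deg: "degree f > 0" and M: "M \<noteq> 0"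
  shows "\<exists>p n. prime p \<and> \<not> p dvd M \<and> p dvd poly f n"
proof (cases "poly f 0 = 0")
  case True
  obtain q :: nat where q: "prime q" "q > nat \<bar>M\<bar>" using bigger_prime by blast
  have pq: "prime (int q)" using q by simp
  have "\<not> int q dvd M"
  proof
    assume "int q dvd M"
    hence "\<bar>int q\<bar> \<le> \<bar>M\<bar>" using M dvd_imp_le_int by blast
    thus False using q(2) by simp
  qed
  moreover have "int q dvd poly f (0 + int q) - poly f 0" by (rule taylor_dvd)
  ultimately show ?thesis using pq True by (intro exI[of _ "int q"] exI[of _ "int q"]) auto
next
  case False
  define a where "a = poly f 0"
  have a: "a \<noteq> 0" using False a_def by simp
  define R where "R = {y. poly f y = a} \<union> {y. poly f y = -a} \<union> {y. poly f y = 0}"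
  have "finite R" unfolding R_def using finite_vals[OF deg] by blast
  moreover have "infinite (range (\<lambda>x. a * M * x))"
  proof -
    have "inj (\<lambda>x. a * M * x)" using a M by (auto simp: inj_on_def)
    moreover have "infinite (UNIV :: int set)" by (rule infinite_UNIV_int)
    ultimately show ?thesis using finite_imageD by blast
  qed
  ultimately have "\<not> range (\<lambda>x. a * M * x) \<subseteq> R" using finite_subset by blast
  then obtain x where x: "a * M * x \<notin> R" by blast
  obtain c where c: "poly f (0 + a*M*x) = poly f 0 + (a*M*x) * poly (pderiv f) 0 + (a*M*x)^2 * c"
    using taylor2 by blast
  define w where "w = 1 + M * (x * poly (pderiv f) 0 + a * M * x^2 * c)"
  have val: "poly f (a*M*x) = a * w" using c by (simp add: w_def a_def power2_eq_square algebra_simps)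
  have "w \<noteq> 0" "w \<noteq> 1" "w \<noteq> -1" using x val unfolding R_def by auto
  hence "\<not> is_unit w" by auto
  then obtain p where p: "p dvd w" "prime p" using prime_divisor_exists \<open>w \<noteq> 0\<close> by blast
  have "\<not> p dvd M"
  proof
    assume "p dvd M"
    hence "p dvd w - 1" by (simp add: w_def)
    hence "p dvd w - (w - 1)" using p(1) by (rule dvd_diff[rotated])
    hence "p dvd 1" by simp
    thus False using p(2) by (meson not_prime_unit)
  qed
  moreover have "p dvd poly f (a*M*x)" using val p(1) by simp
  ultimately show ?thesis using p(2) by blast
qed

lemma bez_eval:
  assumes "U * f + V * g = [:N:]" "prime p" "\<not> p dvd N" "p dvd poly f n"
  shows "\<not> p dvd poly g n"
proof
  assume "p dvd poly g n"
  moreover have "poly U n * poly f n + poly V n * poly g n = N"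
    using arg_cong[OF assms(1), of "\<lambda>q. poly q n"] by simp
  ultimately have "p dvd N" using assms(4) by (metis dvd_add dvd_mult)
  with assms(3) show False by simp
qed

lemma core:
  fixes fZ GZ D F U1 V1 U2 V2 U3 V3 :: "int poly" and K N1 N2 N3 :: int
  assumes deg: "degree fZ > 0" and K: "K \<noteq> 0" and e: "fZ * GZ = smult K F"
    and b1: "U1 * fZ + V1 * GZ = [:N1:]" "N1 \<noteq> 0"
    and b2: "U2 * fZ + V2 * D = [:N2:]" "N2 \<noteq> 0"
    and b3: "U3 * fZ + V3 * pderiv fZ = [:N3:]" "N3 \<noteq> 0"
  shows "infinite {n. poly F n \<noteq> 0 \<and> \<not> sqf_part (poly F n) dvd poly D n}"
proof -
  define M where "M = K * N1 * N2 * N3"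
  have M: "M \<noteq> 0" using K b1 b2 b3 by (simp add: M_def)
  obtain p n0 where p: "prime p" "\<not> p dvd M" and pn0: "p dvd poly fZ n0"
    using schur[OF deg M] by blast
  have pK: "\<not> p dvd K" and pN1: "\<not> p dvd N1" and pN2: "\<not> p dvd N2" and pN3: "\<not> p dvd N3"
    using p(2) unfolding M_def by (meson dvd_mult dvd_mult2)+
  have pd: "\<not> p dvd poly (pderiv fZ) n0" by (rule bez_eval[OF b3(1) p(1) pN3 pn0])
  obtain n1 where n1: "p dvd poly fZ n1" "\<not> p^2 dvd poly fZ n1"
  proof (cases "p^2 dvd poly fZ n0")
    case False
    then show ?thesis using that pn0 by blast
  next
    case True
    obtain c where c: "poly fZ (n0 + p) = poly fZ n0 + p * poly (pderiv fZ) n0 + p^2 * c"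
      using taylor2 by blast
    have "p dvd poly fZ (n0 + p)" using c pn0 by (simp add: power2_eq_square)
    moreover have "\<not> p^2 dvd poly fZ (n0 + p)"
    proof
      assume "p^2 dvd poly fZ (n0 + p)"
      hence "p^2 dvd poly fZ (n0 + p) - poly fZ n0 - p^2 * c" using True by simp
      hence "p * p dvd p * poly (pderiv fZ) n0" using c by (simp add: power2_eq_square)
      hence "p dvd poly (pderiv fZ) n0" using p(1) by (simp add: prime_gt_0_int)
      with pd show False by simp
    qed
    ultimately show ?thesis using that by blast
  qed
  have p0: "p \<noteq> 0" using p(1) by auto
  have bad: "n1 + p^2 * k \<in> {n. poly F n \<noteq> 0 \<and> \<not> sqf_part (poly F n) dvd poly D n}" for k
  proof -
    define n where "n = n1 + p^2 * k"
    have "p^2 dvd poly fZ (n1 + p^2 * k) - poly fZ n1"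
      using taylor_dvd[of "p^2 * k" fZ n1] by (meson dvd_mult2 dvd_trans dvd_refl)
    hence dd: "p^2 dvd poly fZ n - poly fZ n1" by (simp add: n_def)
    have fn1: "p dvd poly fZ n"
      using dd n1(1) by (metis dvd_add dvd_power diff_add_cancel pos2 dvd_trans power2_eq_square dvd_triv_left)
    have fn2: "\<not> p^2 dvd poly fZ n"
    proof
      assume "p^2 dvd poly fZ n"
      hence "p^2 dvd poly fZ n - (poly fZ n - poly fZ n1)" using dd by (rule dvd_diff)
      with n1(2) show False by simp
    qed
    have gn: "\<not> p dvd poly GZ n" by (rule bez_eval[OF b1(1) p(1) pN1 fn1])
    have dn: "\<not> p dvd poly D n" by (rule bez_eval[OF b2(1) p(1) pN2 fn1])
    have ev: "poly fZ n * poly GZ n = K * poly F n"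
      using arg_cong[OF e, of "\<lambda>q. poly q n"] by simp
    have "p dvd K * poly F n" using ev fn1 by (metis dvd_mult2)
    hence pF: "p dvd poly F n" using pK p(1) by (simp add: prime_dvd_mult_iff)
    have pF2: "\<not> p^2 dvd poly F n"
    proof
      assume "p^2 dvd poly F n"
      hence "p^2 dvd poly fZ n * poly GZ n" using ev by (simp add: dvd_mult)
      moreover have "coprime (p^2) (poly GZ n)" using gn p(1)
        by (simp add: prime_imp_coprime)
      ultimately have "p^2 dvd poly fZ n" using coprime_dvd_mult_left_iff by blast
      with fn2 show False by simp
    qed
    have F0: "poly F n \<noteq> 0" using pF2 by auto
    have "p dvd sqf_part (poly F n)" by (rule prime_dvd_sqf_part[OF p(1) pF pF2])
    hence "\<not> sqf_part (poly F n) dvd poly D n" using dn dvd_trans by blast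
    with F0 show ?thesis by (simp add: n_def)
  qed
  have "inj (\<lambda>k. n1 + p^2 * k)" using p0 by (auto simp: inj_on_def)
  hence "infinite (range (\<lambda>k. n1 + p^2 * k))" using infinite_UNIV_int finite_imageD by blast
  moreover have "range (\<lambda>k. n1 + p^2 * k) \<subseteq> {n. poly F n \<noteq> 0 \<and> \<not> sqf_part (poly F n) dvd poly D n}"
    using bad by blast
  ultimately show ?thesis using finite_subset by blast
qed


lemma bezout_conv:
  fixes x y :: "rat poly"
  assumes cp: "coprime x y" and X: "qp X = smult a x" and Y: "qp Y = smult b y"
    and a: "a \<noteq> 0" and b: "b \<noteq> 0"
  shows "\<exists>U V N. N \<noteq> 0 \<and> U * X + V * Y = [:N:]"
proof -
  define u where "u = fst (bezout_coefficients x y)"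
  define v where "v = snd (bezout_coefficients x y)"
  have "u * x + v * y = 1"
    using bezout_coefficients_fst_snd[of x y] cp by (simp add: u_def v_def)
  moreover have "x = smult (1/a) (qp X)" "y = smult (1/b) (qp Y)" using X Y a b by simp_all
  ultimately have "smult (1/a) u * qp X + smult (1/b) v * qp Y = 1" by simp
  then show ?thesis by (rule bezout_int)
qed

theorem lemma5p3:
  fixes F D :: "int poly"
  assumes "sqfree_int_poly F"
    and "finite {n::int. poly F n \<noteq> 0 \<and> \<not> (sqf_part (poly F n) dvd poly D n)}"
  shows "(map_poly of_int F :: rat poly) dvd map_poly of_int D"
proof (rule ccontr)
  assume nd: "\<not> qp F dvd qp D"
  have F0: "F \<noteq> 0"
  proof
    assume "F = 0"
    hence "F = [:0,1:]^2 * 0" by simp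
    hence "[:0,1:] = (1::int poly) \<or> [:0,1:] = (-1::int poly)"
      using assms(1) unfolding sqfree_int_poly_def by blast
    thus False by (metis degree_pCons_eq_if one_neq_zero degree_1 degree_minus one_pCons pCons_eq_iff zero_neq_one nat.distinct(1))
  qed
  have Fq0: "qp F \<noteq> 0" using F0 by (metis map_poly_0 qp_inj)
  define g where "g = gcd (qp F) (qp D)"
  obtain h where h: "qp F = g * h" using gcd_dvd1[of "qp F" "qp D"] unfolding g_def by (elim dvdE)
  have h0: "h \<noteq> 0" using h Fq0 by auto
  have hu: "\<not> is_unit h"
  proof
    assume "is_unit h"
    hence "qp F dvd g" using h by (simp add: dvd_mult_unit_iff)
    hence "qp F dvd qp D" unfolding g_def using gcd_dvd2 dvd_trans by blast
    with nd show False by simp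
  qed
  obtain f where f: "f dvd h" "prime f" using prime_divisor_exists[OF h0 hu] by blast
  have f0: "f \<noteq> 0" using f(2) by auto
  have degf: "degree f > 0" using f(2) f0 is_unit_iff_degree[OF f0] by (auto simp: prime_def prime_elem_def)
  have fF: "f dvd qp F" using f(1) h by auto
  have nsq: "\<not> f^2 dvd qp F" using sqfree_no_square[OF assms(1) degf] by blast
  have fD: "\<not> f dvd qp D"
  proof
    assume "f dvd qp D"
    hence "f dvd g" unfolding g_def using fF by simp
    hence "f * f dvd g * h" using f(1) by (rule mult_dvd_mono)
    with nsq h show False by (simp add: power2_eq_square)
  qed
  obtain Gq where Gq: "qp F = f * Gq" using fF by (elim dvdE)
  have fG: "\<not> f dvd Gq"
  proof
    assume "f dvd Gq"
    hence "f * f dvd f * Gq" by simp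
    with nsq Gq show False by (simp add: power2_eq_square)
  qed
  have fd: "\<not> f dvd pderiv f"
  proof
    assume "f dvd pderiv f"
    moreover have "pderiv f \<noteq> 0" using degf by (simp add: pderiv_eq_0_iff)
    ultimately have "degree f \<le> degree (pderiv f)" by (rule dvd_imp_degree_le)
    thus False using degf by (simp add: degree_pderiv)
  qed
  obtain c fZ where c: "c > 0" "qp fZ = smult (of_int c) f" using clear_denom by blast
  obtain b GZ where b: "b > 0" "qp GZ = smult (of_int b) Gq" using clear_denom by blast
  have "qp (fZ * GZ) = qp (smult (c * b) F)"
    by (simp add: qp_mult qp_smult c b Gq mult.commute mult.left_commute)
  hence e: "fZ * GZ = smult (c * b) F" by (rule qp_inj)
  have degZ: "degree fZ > 0" using c degf by (metis qp_degree degree_smult_eq of_int_eq_0_iff less_irrefl)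
  have cD: "qp D = smult 1 (qp D)" by simp
  have cd: "qp (pderiv fZ) = smult (of_int c) (pderiv f)" by (simp add: qp_pderiv c pderiv_smult)
  obtain U1 V1 N1 where 1: "N1 \<noteq> 0" "U1 * fZ + V1 * GZ = [:N1:]"
    using bezout_conv[OF prime_imp_coprime[OF f(2) fG] c(2) b(2)] c b by auto
  obtain U2 V2 N2 where 2: "N2 \<noteq> 0" "U2 * fZ + V2 * D = [:N2:]"
    using bezout_conv[OF prime_imp_coprime[OF f(2) fD] c(2) cD] c by auto
  obtain U3 V3 N3 where 3: "N3 \<noteq> 0" "U3 * fZ + V3 * pderiv fZ = [:N3:]"
    using bezout_conv[OF prime_imp_coprime[OF f(2) fd] c(2) cd] c by auto
  have "infinite {n. poly F n \<noteq> 0 \<and> \<not> sqf_part (poly F n) dvd poly D n}"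
    by (rule core[OF degZ _ e 1(2) 1(1) 2(2) 2(1) 3(2) 3(1)]) (use c b in simp)
  with assms(2) show False by simp
qed

end
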